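(* Let $I$ be a list of items with sizes in $(1/3,1]$ whose optimal packing consists of $k=\mathrm{OPT}(I)$ bins, each containing exactly one large item and one medium item; for $i\in[k]$ let $l_i$ and $m_i$ be the large and the medium item of the $i$-th bin of this optimal packing. Let $\pi\in\mathcal{S}_n$ be any permutation and let $X$ be the number of indices $i\in[k]$ such that $l_i$ arrives before $m_i$ in $I^\pi$. Then the Best Fit packing of $I^\pi$ contains at least $X$ bins that each consist of exactly one large item and one medium item.
   Context: An item of size $x$ is large if $x>1/2$ and medium if $x\in(1/3,1/2]$. Bin packing: items with sizes in $(0,1]$ are packed into unit-capacity bins (total size per bin at most $1$); $\mathrm{OPT}(I)$ is the minimum number of bins. The online algorithm Best Fit processes the items in the given order and packs the current item into the fullest bin (largest current load) into which it fits, opening a new bin if it fits into no existing bin; items are never moved. For $\pi\in\mathcal{S}_n$ (permutations of $[n]$) and $I=(x_1,\ldots,x_n)$, $I^\pi=(x_{\pi(1)},\ldots,x_{\pi(n)})$. *)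

theory Defs
  imports Complex_Main "HOL-Library.Multiset" "HOL-Combinatorics.Permutations"
begin

text \<open>Items are identified by their indices 0..n-1 in the list I; item i has size I!i.
  A bin is a list of item indices.\<close>

definition large :: "real \<Rightarrow> bool" where
  "large x \<longleftrightarrow> x > 1/2"

definition medium :: "real \<Rightarrow> bool" where
  "medium x \<longleftrightarrow> 1/3 < x \<and> x \<le> 1/2"

definition load :: "real list \<Rightarrow> nat list \<Rightarrow> real" where
  "load I B = sum_list (map (\<lambda>i. I ! i) B)"

definition is_packing :: "real list \<Rightarrow> nat list list \<Rightarrow> bool" where
  "is_packing I P \<longleftrightarrow> mset (concat P) = mset [0..<length I] \<and> (\<forall>B\<in>set P. load I B \<le> 1)"

definition OPT :: "real list \<Rightarrow> nat" where
  "OPT I = (LEAST k. \<exists>P. is_packing I P \<and> length P = k)"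

text \<open>One step of Best Fit: item i goes into a fullest bin into which it fits
  (any such bin, i.e. arbitrary tie-breaking), or into a new bin if it fits nowhere.\<close>
definition bf_step :: "real list \<Rightarrow> nat list list \<Rightarrow> nat \<Rightarrow> nat list list \<Rightarrow> bool" where
  "bf_step I bins i bins' \<longleftrightarrow>
     ((\<forall>B\<in>set bins. load I B + I ! i > 1) \<and> bins' = bins @ [[i]]) \<or>
     (\<exists>j<length bins. load I (bins ! j) + I ! i \<le> 1 \<and>
        (\<forall>j'<length bins. load I (bins ! j') + I ! i \<le> 1 \<longrightarrow> load I (bins ! j') \<le> load I (bins ! j)) \<and>
        bins' = bins[j := bins ! j @ [i]])"

inductive bf_pack :: "real list \<Rightarrow> nat list \<Rightarrow> nat list list \<Rightarrow> bool" for I where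
  Nil: "bf_pack I [] []"
| snoc: "bf_pack I xs bins \<Longrightarrow> bf_step I bins i bins' \<Longrightarrow> bf_pack I (xs @ [i]) bins'"

definition is_LM_bin :: "real list \<Rightarrow> nat list \<Rightarrow> bool" where
  "is_LM_bin I B \<longleftrightarrow> (\<exists>a b. mset B = {#a, b#} \<and> large (I ! a) \<and> medium (I ! b))"

end

theory Submission
  imports Defs
begin

definition cnt :: "real list \<Rightarrow> nat list list \<Rightarrow> nat" where
  "cnt I bins = length (filter (is_LM_bin I) bins)"

lemma cnt_upd:
  assumes "j < length bins" "\<not> is_LM_bin I (bins ! j)"
  shows "cnt I (bins[j := B]) = cnt I bins + (if is_LM_bin I B then 1 else 0)"
proof -
  have 1: "bins[j := B] = take j bins @ B # drop (Suc j) bins"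
    using assms(1) by (rule upd_conv_take_nth_drop)
  have 2: "bins = take j bins @ bins ! j # drop (Suc j) bins"
    using assms(1) by (simp add: id_take_nth_drop)
  show ?thesis
    apply (subst 1, subst (3) 2) using assms(2) by (simp add: cnt_def)
qed

lemma cnt_app: "cnt I (bins @ [[c]]) = cnt I bins"
  by (simp add: cnt_def is_LM_bin_def)

lemma single_not_LM: "\<not> is_LM_bin I [x]"
  by (auto simp: is_LM_bin_def)

lemma LM_pair: "large (I!a) \<Longrightarrow> medium (I!b) \<Longrightarrow> is_LM_bin I [a,b] \<and> is_LM_bin I [b,a]"
  unfolding is_LM_bin_def by (metis add_mset_commute mset.simps)

lemma load_single[simp]: "load I [x] = I ! x" by (simp add: load_def)
lemma load_pair[simp]: "load I [x,y] = I ! x + I ! y" by (simp add: load_def)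

lemma distinct_concat_nth:
  "distinct (concat P) \<Longrightarrow> i < length P \<Longrightarrow> j < length P \<Longrightarrow> i \<noteq> j \<Longrightarrow> set (P!i) \<inter> set (P!j) = {}"
proof (induction P arbitrary: i j)
  case Nil then show ?case by simp
next
  case (Cons a P)
  have d: "set a \<inter> set (concat P) = {}" using Cons.prems(1) by simp
  have s: "\<And>q. q < length P \<Longrightarrow> set (P!q) \<subseteq> set (concat P)"
    by (simp add: UN_upper)
  show ?case
  proof (cases i)
    case 0
    then obtain j' where "j = Suc j'" using Cons by (cases j) auto
    then show ?thesis using Cons.prems 0 d s[of j'] by auto
  next
    case (Suc i')
    show ?thesis
    proof (cases j)
      case 0 then show ?thesis using Cons.prems Suc d s[of i'] by auto
    next
      case (Suc j') then show ?thesis using Cons \<open>i = Suc i'\<close> by auto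
    qed
  qed
qed

lemma card_inj_le1: "inj_on f A \<Longrightarrow> finite B \<Longrightarrow> B \<subseteq> {i\<in>A. f i = c} \<Longrightarrow> card B \<le> 1"
  by (subst One_nat_def, subst card_le_Suc0_iff_eq) (auto dest: inj_onD)


lemma size_bounds: "\<forall>x\<in>set I. 1/3 < x \<and> x \<le> 1 \<Longrightarrow> x < length I \<Longrightarrow> 1/3 < I!x \<and> I!x \<le> 1"
  by (auto dest: nth_mem)

context
  fixes I :: "real list" and n k :: nat and l m p pos :: "nat \<Rightarrow> nat"
  assumes sizes: "\<forall>x\<in>set I. 1/3 < x \<and> x \<le> 1"
    and n_def: "n = length I"
    and lm: "\<forall>i<k. large (I!l i) \<and> medium (I!m i) \<and> I!l i + I!m i \<le> 1 \<and> l i < n \<and> m i < n"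
    and injl: "inj_on l {..<k}" and injm: "inj_on m {..<k}"
    and p1: "\<And>t. t < n \<Longrightarrow> p t < n \<and> pos (p t) = t"
    and p2: "\<And>x. x < n \<Longrightarrow> pos x < n \<and> p (pos x) = x"
begin

definition Pend where "Pend t = {i. i<k \<and> pos (l i) < t \<and> t \<le> pos (m i)}"
definition Comp where "Comp t = {i. i<k \<and> pos (l i) < pos (m i) \<and> pos (m i) < t}"
definition singleL where "singleL B \<longleftrightarrow> (\<exists>x. B = [x] \<and> large (I!x))"
definition WF where "WF bins \<longleftrightarrow> (\<forall>B\<in>set bins. (\<exists>x. B=[x] \<and> x<n) \<or> (\<exists>x y. B=[x,y] \<and> x<n \<and> y<n))"
definition Inv where "Inv t bins \<longleftrightarrow> WF bins \<and> (\<exists>D \<phi>. D \<subseteq> Pend t \<and> inj_on \<phi> D \<and>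
   (\<forall>i\<in>D. \<phi> i < length bins \<and> singleL (bins!\<phi> i) \<and> load I (bins!\<phi> i) + I!(m i) \<le> 1) \<and>
   card (Comp t) + card (Pend t) \<le> card D + cnt I bins)"

lemma sz: "x < n \<Longrightarrow> 1/3 < I!x \<and> I!x \<le> 1"
  using size_bounds[OF sizes] n_def by simp

lemma fin_Pend: "finite (Pend t)" unfolding Pend_def by simp
lemma fin_Comp: "finite (Comp t)" unfolding Comp_def by simp

lemma WF_get: "WF bins \<Longrightarrow> j < length bins \<Longrightarrow> (\<exists>x. bins!j=[x] \<and> x<n) \<or> (\<exists>x y. bins!j=[x,y] \<and> x<n \<and> y<n)"
  unfolding WF_def using nth_mem by blast

lemma WF_single: "WF bins \<Longrightarrow> j < length bins \<Longrightarrow> c < n \<Longrightarrow> load I (bins!j) + I!c \<le> 1 \<Longrightarrow> \<exists>x. bins!j=[x] \<and> x<n"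
proof -
  assume a: "WF bins" "j < length bins" "c < n" "load I (bins!j) + I!c \<le> 1"
  show ?thesis
  proof (rule ccontr)
    assume "\<not> ?thesis"
    then obtain x y where "bins!j=[x,y]" "x<n" "y<n" using WF_get[OF a(1,2)] by blast
    then show False using a sz[of x] sz[of y] sz[of c] by simp
  qed
qed

lemma Inv0: "Inv 0 []"
  unfolding Inv_def WF_def Pend_def Comp_def
  by (rule conjI, simp, rule exI[of _ "{}"], auto)

lemma Inv_final: "Inv n bins \<Longrightarrow> card {i. i < k \<and> pos (l i) < pos (m i)} \<le> cnt I bins"
proof -
  assume "Inv n bins"
  then obtain D \<phi> where D: "D \<subseteq> Pend n" "card (Comp n) + card (Pend n) \<le> card D + cnt I bins"
    unfolding Inv_def by blast
  have "Pend n = {}" unfolding Pend_def using lm p2 by fastforce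
  moreover have "Comp n = {i. i < k \<and> pos (l i) < pos (m i)}" unfolding Comp_def using lm p2 by fastforce
  ultimately show ?thesis using D by simp
qed


lemma posl: "i < k \<Longrightarrow> t < n \<Longrightarrow> pos (l i) = t \<longleftrightarrow> l i = p t"
  using lm p1 p2 by metis
lemma posm: "i < k \<Longrightarrow> t < n \<Longrightarrow> pos (m i) = t \<longleftrightarrow> m i = p t"
  using lm p1 p2 by metis

lemma step_large:
  assumes t: "t < n" and inv: "Inv t bins" and st: "bf_step I bins (p t) bins'"
    and lg: "large (I ! p t)"
  shows "Inv (Suc t) bins'"
proof -
  define c where "c = p t"
  have c: "c < n" "pos c = t" using p1[OF t] c_def by auto
  obtain D \<phi> where WF: "WF bins" and D: "D \<subseteq> Pend t" "inj_on \<phi> D"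
    "\<forall>i\<in>D. \<phi> i < length bins \<and> singleL (bins!\<phi> i) \<and> load I (bins!\<phi> i) + I!(m i) \<le> 1"
    "card (Comp t) + card (Pend t) \<le> card D + cnt I bins"
    using inv unfolding Inv_def by blast
  define N where "N = {i. i<k \<and> l i = c \<and> t < pos (m i)}"
  have finN: "finite N" unfolding N_def by simp
  have N1: "card N \<le> 1" by (rule card_inj_le1[OF injl finN, of c]) (auto simp: N_def)
  have notm: "\<And>i. i < k \<Longrightarrow> m i \<noteq> c" using lm lg c_def unfolding large_def medium_def by force
  have CS: "Comp (Suc t) = Comp t"
    unfolding Comp_def using posm[OF _ t] notm c_def by (auto simp: less_Suc_eq)
  have PS: "Pend (Suc t) = Pend t \<union> N"
    unfolding Pend_def N_def using posm[OF _ t] posl[OF _ t] notm c_def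
    by (auto simp: less_Suc_eq Suc_le_eq) (metis le_neq_implies_less)+
  have DN: "D \<inter> N = {}" using D(1) posl[OF _ t] c_def unfolding Pend_def N_def by auto
  have cP: "card (Pend (Suc t)) \<le> card (Pend t) + card N"
    unfolding PS by (rule card_Un_le)
  from st[unfolded bf_step_def] show ?thesis
  proof (elim disjE exE conjE)
    assume nf: "\<forall>B\<in>set bins. load I B + I ! p t > 1" and b': "bins' = bins @ [[p t]]"
    define \<phi>' where "\<phi>' = (\<lambda>i. if i \<in> N then length bins else \<phi> i)"
    have "inj_on \<phi>' (D \<union> N)"
      unfolding inj_on_def \<phi>'_def using D(2,3) DN N1 card_le_Suc0_iff_eq[OF finN]
      by (auto dest: inj_onD)
    moreover have "D \<union> N \<subseteq> Pend (Suc t)" using PS D(1) by auto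
    moreover have "\<forall>i\<in>D \<union> N. \<phi>' i < length bins' \<and> singleL (bins'!\<phi>' i) \<and> load I (bins'!\<phi>' i) + I!(m i) \<le> 1"
      using D(3) DN lm lg unfolding \<phi>'_def b' N_def singleL_def c_def by (auto simp: nth_append)
    moreover have "card (Comp (Suc t)) + card (Pend (Suc t)) \<le> card (D \<union> N) + cnt I bins'"
      using D(4) cP CS b' cnt_app card_Un_disjoint[OF finite_subset[OF D(1) fin_Pend] finN DN] by simp
    moreover have "WF bins'" using WF c c_def b' unfolding WF_def by auto
    ultimately show ?thesis unfolding Inv_def by blast
  next
    fix j assume j: "j < length bins" and fit: "load I (bins ! j) + I ! p t \<le> 1"
      and b': "bins' = bins[j := bins ! j @ [p t]]"
    obtain x where x: "bins!j = [x]" "x < n" using WF_single[OF WF j c(1)] fit c_def by blast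
    have xm: "\<not> large (I!x)" using fit x lg unfolding large_def by simp
    hence "medium (I!x)" using sz[OF x(2)] unfolding large_def medium_def by simp
    hence LM: "is_LM_bin I [x, c]" using LM_pair lg c_def by blast
    have cnt': "cnt I bins' = cnt I bins + 1"
      using cnt_upd[OF j, of I "[x,c]"] b' x single_not_LM LM c_def by simp
    have "\<forall>i\<in>D. \<phi> i < length bins' \<and> singleL (bins'!\<phi> i) \<and> load I (bins'!\<phi> i) + I!(m i) \<le> 1"
    proof
      fix i assume "i \<in> D"
      then have "\<phi> i \<noteq> j" using D(3) x xm unfolding singleL_def by force
      then show "\<phi> i < length bins' \<and> singleL (bins'!\<phi> i) \<and> load I (bins'!\<phi> i) + I!(m i) \<le> 1"
        using D(3) \<open>i \<in> D\<close> b' by simp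
    qed
    moreover have "D \<subseteq> Pend (Suc t)" using PS D(1) by auto
    moreover have "card (Comp (Suc t)) + card (Pend (Suc t)) \<le> card D + cnt I bins'"
      using D(4) cP CS cnt' N1 by simp
    moreover have "WF bins'" using WF c c_def b' x j unfolding WF_def
      by (auto simp: set_update_distinct dest!: set_update_subset_insert[THEN subsetD])
    ultimately show ?thesis unfolding Inv_def using D(2) by blast
  qed
qed


lemma step_medium:
  assumes t: "t < n" and inv: "Inv t bins" and st: "bf_step I bins (p t) bins'"
    and lg: "\<not> large (I ! p t)"
  shows "Inv (Suc t) bins'"
proof -
  define c where "c = p t"
  have c: "c < n" "pos c = t" using p1[OF t] c_def by auto
  have cm: "medium (I!c)" using sz[OF c(1)] lg c_def unfolding large_def medium_def by simp
  obtain D \<phi> where WF: "WF bins" and D: "D \<subseteq> Pend t" "inj_on \<phi> D"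
    "\<forall>i\<in>D. \<phi> i < length bins \<and> singleL (bins!\<phi> i) \<and> load I (bins!\<phi> i) + I!(m i) \<le> 1"
    "card (Comp t) + card (Pend t) \<le> card D + cnt I bins"
    using inv unfolding Inv_def by blast
  have finD: "finite D" using finite_subset[OF D(1) fin_Pend] .
  define X where "X = {i \<in> Pend t. m i = c}"
  have notl: "\<And>i. i < k \<Longrightarrow> l i \<noteq> c" using lm lg c_def unfolding large_def medium_def by force
  have CS: "Comp (Suc t) = Comp t \<union> X"
    unfolding Comp_def X_def Pend_def using posm[OF _ t] notl c_def c
    by (auto simp: less_Suc_eq)
  have PS: "Pend t = Pend (Suc t) \<union> X"
    unfolding Pend_def X_def using posm[OF _ t] posl[OF _ t] notl c_def c
    by (auto simp: less_Suc_eq Suc_le_eq) (metis le_neq_implies_less)+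
  have d1: "Comp t \<inter> X = {}" unfolding Comp_def X_def Pend_def using c by auto
  have d2: "Pend (Suc t) \<inter> X = {}" unfolding X_def Pend_def using c by auto
  have sumeq: "card (Comp (Suc t)) + card (Pend (Suc t)) = card (Comp t) + card (Pend t)"
    unfolding CS using PS card_Un_disjoint[OF fin_Comp _ d1] card_Un_disjoint[OF fin_Pend _ d2]
    by (metis add.assoc add.commute finite_Un fin_Pend)
  have DP: "\<And>D'. D' \<subseteq> D \<Longrightarrow> (\<forall>i\<in>D'. m i \<noteq> c) \<Longrightarrow> D' \<subseteq> Pend (Suc t)"
    using D(1) PS unfolding X_def by blast
  from st[unfolded bf_step_def] show ?thesis
  proof (elim disjE exE conjE)
    assume nf: "\<forall>B\<in>set bins. load I B + I ! p t > 1" and b': "bins' = bins @ [[p t]]"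
    have "\<forall>i\<in>D. m i \<noteq> c" using D(3) nf c_def nth_mem by fastforce
    hence "D \<subseteq> Pend (Suc t)" using DP by blast
    moreover have "\<forall>i\<in>D. \<phi> i < length bins' \<and> singleL (bins'!\<phi> i) \<and> load I (bins'!\<phi> i) + I!(m i) \<le> 1"
      using D(3) b' by (auto simp: nth_append)
    moreover have "card (Comp (Suc t)) + card (Pend (Suc t)) \<le> card D + cnt I bins'"
      using D(4) sumeq b' cnt_app by simp
    moreover have "WF bins'" using WF c c_def b' unfolding WF_def by auto
    ultimately show ?thesis unfolding Inv_def using D(2) by blast
  next
    fix j assume j: "j < length bins" and fit: "load I (bins ! j) + I ! p t \<le> 1"
      and full: "\<forall>j'<length bins. load I (bins ! j') + I ! p t \<le> 1 \<longrightarrow> load I (bins ! j') \<le> load I (bins ! j)"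
      and b': "bins' = bins[j := bins ! j @ [p t]]"
    obtain x where x: "bins!j = [x]" "x < n" using WF_single[OF WF j c(1)] fit c_def by blast
    have WF': "WF bins'" using WF c c_def b' x j unfolding WF_def
      by (auto simp: set_update_distinct dest!: set_update_subset_insert[THEN subsetD])
    have len: "length bins' = length bins" using b' by simp
    have keep: "\<And>q. q \<noteq> j \<Longrightarrow> bins' ! q = bins ! q" using b' by simp
    show ?thesis
    proof (cases "large (I!x)")
      case xl: True
      hence LM: "is_LM_bin I [x, c]" using LM_pair cm by blast
      have cnt': "cnt I bins' = cnt I bins + 1"
        using cnt_upd[OF j, of I "[x,c]"] b' x single_not_LM LM c_def by simp
      show ?thesis
      proof (cases "\<exists>i0\<in>D. m i0 = c \<and> (\<exists>j0\<in>D. \<phi> j0 = j \<and> j0 \<noteq> i0)")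
        case True
        then obtain i0 j0 where ij: "i0 \<in> D" "m i0 = c" "j0 \<in> D" "\<phi> j0 = j" "j0 \<noteq> i0" by blast
        define \<phi>' where "\<phi>' = \<phi>(j0 := \<phi> i0)"
        have Dk: "D \<subseteq> {..<k}" using D(1) unfolding Pend_def by auto
        have mD: "\<forall>i\<in>D - {i0}. m i \<noteq> c" using ij injm Dk by (auto dest: inj_onD)
        have phij: "\<forall>i\<in>D - {j0}. \<phi> i \<noteq> j" using ij D(2) by (auto dest: inj_onD)
        have "inj_on \<phi>' (D - {i0})"
          unfolding inj_on_def \<phi>'_def using D(2) ij by (auto dest: inj_onD)
        moreover have "D - {i0} \<subseteq> Pend (Suc t)" using DP mD by blast
        moreover have "\<forall>i\<in>D - {i0}. \<phi>' i < length bins' \<and> singleL (bins'!\<phi>' i) \<and> load I (bins'!\<phi>' i) + I!(m i) \<le> 1"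
        proof
          fix i assume i: "i \<in> D - {i0}"
          show "\<phi>' i < length bins' \<and> singleL (bins'!\<phi>' i) \<and> load I (bins'!\<phi>' i) + I!(m i) \<le> 1"
          proof (cases "i = j0")
            case True
            have a: "\<phi> i0 \<noteq> j" using phij ij by auto
            have b: "load I (bins ! \<phi> i0) \<le> load I (bins ! j)"
              using full D(3) ij c_def by auto
            have e: "load I (bins ! j) + I!(m j0) \<le> 1" using D(3) ij by auto
            show ?thesis using True a b e keep len D(3) ij unfolding \<phi>'_def by auto
          next
            case False
            then show ?thesis using i phij keep len D(3) unfolding \<phi>'_def by auto
          qed
        qed
        moreover have "card (Comp (Suc t)) + card (Pend (Suc t)) \<le> card (D - {i0}) + cnt I bins'"
          using D(4) sumeq cnt' ij(1) finD by (simp add: card_Diff_singleton)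
        ultimately show ?thesis unfolding Inv_def using WF' by blast
      next
        case False
        define D' where "D' = D - {i\<in>D. m i = c} - {i\<in>D. \<phi> i = j}"
        have R: "D - D' = {i\<in>D. m i = c} \<union> {i\<in>D. \<phi> i = j}" unfolding D'_def by auto
        have "card (D - D') \<le> 1"
          unfolding One_nat_def
          apply (subst card_le_Suc0_iff_eq)
          using finD apply simp
          unfolding R using False injm D(1,2) unfolding Pend_def
          by (auto dest: inj_onD)
        moreover have "D' \<subseteq> D" unfolding D'_def by auto
        moreover have "finite D'" using finD unfolding D'_def by simp
        ultimately have cD: "card D \<le> card D' + 1"
          using card_Diff_subset[of D' D] card_mono[OF finD, of D'] by simp
        have "inj_on \<phi> D'" using D(2) unfolding D'_def by (rule inj_on_subset) auto
        moreover have "D' \<subseteq> Pend (Suc t)" using DP unfolding D'_def by blast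
        moreover have "\<forall>i\<in>D'. \<phi> i < length bins' \<and> singleL (bins'!\<phi> i) \<and> load I (bins'!\<phi> i) + I!(m i) \<le> 1"
          using D(3) keep len unfolding D'_def by auto
        moreover have "card (Comp (Suc t)) + card (Pend (Suc t)) \<le> card D' + cnt I bins'"
          using D(4) sumeq cnt' cD by simp
        ultimately show ?thesis unfolding Inv_def using WF' by blast
      qed
    next
      case xl: False
      have cnt': "cnt I bins' \<ge> cnt I bins"
        using cnt_upd[OF j, of I "[x,c]"] b' x single_not_LM c_def by simp
      have nj: "\<forall>i\<in>D. \<phi> i \<noteq> j" using D(3) x xl unfolding singleL_def by force
      have "\<forall>i\<in>D. m i \<noteq> c"
      proof (intro ballI notI)
        fix i assume i: "i \<in> D" and mi: "m i = c"
        obtain y where y: "bins ! \<phi> i = [y]" "large (I!y)" using D(3) i unfolding singleL_def by blast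
        have "load I (bins ! \<phi> i) \<le> load I (bins ! j)" using full D(3) i mi c_def by auto
        then show False using y x xl unfolding large_def by simp
      qed
      hence "D \<subseteq> Pend (Suc t)" using DP by blast
      moreover have "\<forall>i\<in>D. \<phi> i < length bins' \<and> singleL (bins'!\<phi> i) \<and> load I (bins'!\<phi> i) + I!(m i) \<le> 1"
        using D(3) keep len nj by auto
      moreover have "card (Comp (Suc t)) + card (Pend (Suc t)) \<le> card D + cnt I bins'"
        using D(4) sumeq cnt' by simp
      ultimately show ?thesis unfolding Inv_def using WF' D(2) by blast
    qed
  qed
qed


lemma Inv_step: "t < n \<Longrightarrow> Inv t bins \<Longrightarrow> bf_step I bins (p t) bins' \<Longrightarrow> Inv (Suc t) bins'"
  using step_large step_medium by blast

lemma Inv_pack: "bf_pack I xs bins \<Longrightarrow> \<forall>t. xs = map p [0..<t] \<longrightarrow> t \<le> n \<longrightarrow> Inv t bins"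
proof (induction rule: bf_pack.induct)
  case Nil
  then show ?case using Inv0 by auto
next
  case (snoc xs bins i bins')
  show ?case
  proof (intro allI impI)
    fix t assume e: "xs @ [i] = map p [0..<t]" and tn: "t \<le> n"
    then obtain t' where t': "t = Suc t'" by (cases t) auto
    then have "xs @ [i] = map p [0..<t'] @ [p t']" using e by simp
    then have "xs = map p [0..<t']" "i = p t'" by auto
    then show "Inv t bins'" using snoc t' tn Inv_step[of t' bins bins'] by auto
  qed
qed

end

theorem lemma10:
  fixes I :: "real list" and P :: "nat list list" and k :: nat
    and l m :: "nat \<Rightarrow> nat" and \<pi> :: "nat \<Rightarrow> nat" and bins :: "nat list list"
  assumes sizes: "\<forall>x\<in>set I. 1/3 < x \<and> x \<le> 1"
    and packing: "is_packing I P"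
    and opt: "length P = OPT I" and k_def: "k = OPT I"
    and bins_LM: "\<forall>i<k. mset (P ! i) = {#l i, m i#} \<and> large (I ! l i) \<and> medium (I ! m i)"
    and perm: "\<pi> permutes {..<length I}"
    and bf: "bf_pack I (map \<pi> [0..<length I]) bins"
  shows "card {i. i < k \<and> inv \<pi> (l i) < inv \<pi> (m i)} \<le> length (filter (is_LM_bin I) bins)"
proof -
  define n where "n = length I"
  have kP: "k = length P" using opt k_def by simp
  have me: "mset (concat P) = mset [0..<n]" using packing unfolding is_packing_def n_def by simp
  have dist: "distinct (concat P)" using mset_eq_imp_distinct_iff[OF me] by simp
  have setc: "set (concat P) = {..<n}" using mset_eq_setD[OF me] by auto
  have setP: "\<And>i. i < k \<Longrightarrow> set (P!i) = {l i, m i}"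
    using bins_LM by (metis set_mset_mset set_mset_add_mset_insert set_mset_single insert_is_Un Un_insert_left sup_bot.left_neutral)
  have sub: "\<And>i. i < k \<Longrightarrow> set (P!i) \<subseteq> {..<n}"
    using setc kP by (auto simp: UN_upper)
  have ld: "\<And>i. i < k \<Longrightarrow> load I (P!i) = I!l i + I!m i"
  proof -
    fix i assume i: "i < k"
    have "load I (P!i) = sum_mset (image_mset (\<lambda>j. I!j) (mset (P!i)))"
      unfolding load_def by (metis mset_map sum_mset_sum_list)
    then show "load I (P!i) = I!l i + I!m i" using bins_LM i by simp
  qed
  have lm: "\<forall>i<k. large (I!l i) \<and> medium (I!m i) \<and> I!l i + I!m i \<le> 1 \<and> l i < n \<and> m i < n"
    using bins_LM ld sub setP packing kP unfolding is_packing_def by (auto dest: nth_mem) (metis nth_mem)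
  have lnm: "\<And>i. i < k \<Longrightarrow> l i \<noteq> m i" using bins_LM unfolding large_def medium_def by force
  have injl: "inj_on l {..<k}"
  proof (rule inj_onI)
    fix a b assume "a \<in> {..<k}" "b \<in> {..<k}" "l a = l b"
    then show "a = b" using distinct_concat_nth[OF dist, of a b] setP kP by (cases "a = b") auto
  qed
  have injm: "inj_on m {..<k}"
  proof (rule inj_onI)
    fix a b assume "a \<in> {..<k}" "b \<in> {..<k}" "m a = m b"
    then show "a = b" using distinct_concat_nth[OF dist, of a b] setP kP by (cases "a = b") auto
  qed
  have perm': "\<pi> permutes {..<n}" using perm n_def by simp
  have pinv: "inv \<pi> permutes {..<n}" using permutes_inv[OF perm'] .
  have p1: "\<And>t. t < n \<Longrightarrow> \<pi> t < n \<and> inv \<pi> (\<pi> t) = t"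
    using permutes_in_image[OF perm'] permutes_inverses(2)[OF perm'] by auto
  have p2: "\<And>x. x < n \<Longrightarrow> inv \<pi> x < n \<and> \<pi> (inv \<pi> x) = x"
    using permutes_in_image[OF pinv] permutes_inverses(1)[OF perm'] by auto
  show ?thesis
    using Inv_final[OF sizes n_def lm injl injm p1 p2] Inv_pack[OF sizes n_def lm injl injm p1 p2 bf] n_def
    unfolding cnt_def by simp
qed

end
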